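(* Let $\Gamma$ be the bipartite graph with vertex set $\{L_1,\dots,L_{12}\}\sqcup\{M_1,\dots,M_{12}\}$, where no two $L$'s and no two $M$'s are adjacent, and $L_i$ is adjacent to $M_j$ if and only if $j\in N(i)$, with $N(1)=\{1,2,6,8,9,12\}$, $N(2)=\{1,2,5,7,10,11\}$, $N(3)=\{3,4,6,8,10,11\}$, $N(4)=\{3,4,5,7,9,12\}$, $N(5)=\{2,4,5,6,10,12\}$, $N(6)=\{1,3,5,6,9,11\}$, $N(7)=\{2,4,7,8,9,11\}$, $N(8)=\{1,3,7,8,10,12\}$, $N(9)=\{1,4,6,7,9,10\}$, $N(10)=\{2,3,5,8,9,10\}$, $N(11)=\{2,3,6,7,11,12\}$, $N(12)=\{1,4,5,8,11,12\}$. Let $S=\mathbb{Z}\Gamma/\operatorname{rad}(\mathbb{Z}\Gamma)$, where $\mathbb{Z}\Gamma$ is the free abelian group on the vertices with Gram matrix $A-2\mathbb{I}_{24}$ ($A$ the adjacency matrix). Then the discriminant quadratic form $q\colon S^\vee/S\to\mathbb{Q}/2\mathbb{Z}$, $q(x)=x^2 \bmod 2\mathbb{Z}$, on the discriminant group $S^\vee/S\cong(\mathbb{Z}/2\mathbb{Z})^{\oplus4}\oplus\mathbb{Z}/16\mathbb{Z}$ is given by the Gram matrix $$\begin{bmatrix}0&\tfrac12\\ \tfrac12&0\end{bmatrix}\oplus\begin{bmatrix}0&\tfrac12\\ \tfrac12&0\end{bmatrix}\oplus\begin{bmatrix}\tfrac{3}{16}\end{bmatrix},$$ where the diagonal entries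 are taken modulo $2\mathbb{Z}$ and the off-diagonal entries modulo $\mathbb{Z}$.
   Context: $\operatorname{rad}$ denotes the kernel of the bilinear form; $S^\vee=\operatorname{Hom}(S,\mathbb{Z})\subset S\otimes\mathbb{Q}$ is the dual lattice. *)

theory Defs
  imports Main "HOL.Rat"
begin

text \<open>Vertices are numbered 0..23: vertex i-1 is L_i (1 \<le> i \<le> 12) and vertex 11+j is M_j
  (1 \<le> j \<le> 12).\<close>

definition NL :: "nat \<Rightarrow> nat set" where
  "NL i = (if i = 1 then {1,2,6,8,9,12}
      else if i = 2 then {1,2,5,7,10,11}
      else if i = 3 then {3,4,6,8,10,11}
      else if i = 4 then {3,4,5,7,9,12}
      else if i = 5 then {2,4,5,6,10,12}
      else if i = 6 then {1,3,5,6,9,11}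
      else if i = 7 then {2,4,7,8,9,11}
      else if i = 8 then {1,3,7,8,10,12}
      else if i = 9 then {1,4,6,7,9,10}
      else if i = 10 then {2,3,5,8,9,10}
      else if i = 11 then {2,3,6,7,11,12}
      else if i = 12 then {1,4,5,8,11,12}
      else {})"

definition adj :: "nat \<Rightarrow> nat \<Rightarrow> bool" where
  "adj u v = ((u < 12 \<and> 12 \<le> v \<and> v < 24 \<and> v - 11 \<in> NL (u + 1)) \<or>
              (v < 12 \<and> 12 \<le> u \<and> u < 24 \<and> u - 11 \<in> NL (v + 1)))"

definition gram :: "nat \<Rightarrow> nat \<Rightarrow> int" where
  "gram u v = (if adj u v then 1 else 0) - (if u = v then 2 else 0)"

definition bil :: "(nat \<Rightarrow> rat) \<Rightarrow> (nat \<Rightarrow> rat) \<Rightarrow> rat" where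
  "bil x y = (\<Sum>u<24. \<Sum>v<24. x u * of_int (gram u v) * y v)"

definition QGamma :: "(nat \<Rightarrow> rat) set" where
  "QGamma = {x. \<forall>u\<ge>24. x u = 0}"

definition ZGamma :: "(nat \<Rightarrow> rat) set" where
  "ZGamma = {x \<in> QGamma. \<forall>u<24. x u \<in> \<int>}"

text \<open>Radical of Q Gamma; rad(Z Gamma) = radQ \<inter> ZGamma, and S \<otimes> Q = QGamma / radQ.\<close>
definition radQ :: "(nat \<Rightarrow> rat) set" where
  "radQ = {x \<in> QGamma. \<forall>y \<in> QGamma. bil x y = 0}"

text \<open>Preimage in Q Gamma of the dual lattice S^\<or> = Hom(S, Z) \<subseteq> S \<otimes> Q.\<close>
definition dualL :: "(nat \<Rightarrow> rat) set" where
  "dualL = {x \<in> QGamma. \<forall>y \<in> ZGamma. bil x y \<in> \<int>}"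

text \<open>Preimage in Q Gamma of S: x represents the zero class of S^\<or>/S.\<close>
definition in_S :: "(nat \<Rightarrow> rat) \<Rightarrow> bool" where
  "in_S x = (\<exists>z \<in> ZGamma. \<exists>r \<in> radQ. x = (\<lambda>u. z u + r u))"

definition target_gram :: "nat \<Rightarrow> nat \<Rightarrow> rat" where
  "target_gram k l =
     (if (k, l) \<in> {(0,1),(1,0),(2,3),(3,2)} then 1/2
      else if k = 4 \<and> l = 4 then 3/16 else 0)"

definition lincomb :: "(nat \<Rightarrow> int) \<Rightarrow> (nat \<Rightarrow> nat \<Rightarrow> rat) \<Rightarrow> nat \<Rightarrow> rat" where
  "lincomb c e = (\<lambda>u. \<Sum>k<5. of_int (c k) * e k u)"

end

theory Submission
  imports Defs
begin

definition vl :: "rat list \<Rightarrow> nat \<Rightarrow> rat" where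
  "vl xs u = (if u < length xs then xs ! u else 0)"

definition Gx :: "(nat \<Rightarrow> rat) \<Rightarrow> nat \<Rightarrow> rat" where
  "Gx x v = (\<Sum>u<24. x u * of_int (gram u v))"

definition NB :: "nat list list" where
  "NB = [[12, 13, 17, 19, 20, 23], [12, 13, 16, 18, 21, 22], [14, 15, 17, 19, 21, 22], [14, 15, 16, 18, 20, 23], [13, 15, 16, 17, 21, 23], [12, 14, 16, 17, 20, 22], [13, 15, 18, 19, 20, 22], [12, 14, 18, 19, 21, 23], [12, 15, 17, 18, 20, 21], [13, 14, 16, 19, 20, 21], [13, 14, 17, 18, 22, 23], [12, 15, 16, 19, 22, 23], [0, 1, 5, 7, 8, 11], [0, 1, 4, 6, 9, 10], [2, 3, 5, 7, 9, 10], [2, 3, 4, 6, 8, 11], [1, 3, 4, 5, 9, 11], [0, 2, 4, 5, 8, 10], [1, 3, 6, 7, 8, 10], [0, 2, 6, 7, 9, 11], [0, 3, 5, 6, 8, 9], [1, 2, 4, 7, 8, 9], [1, 2, 5, 6, 10, 11], [0, 3, 4, 7, 10, 11]]"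

definition EL :: "rat list list" where
  "EL = [[0, 1/2, 0, 1/2, 0, 0, 0, 0, 0, 1/2, 0, 1/2, 0, 0, 0, 0, 0, 0, 0, 0, 0, 0, 0, 0], [0, 0, 0, 0, 0, 1/2, 1/2, 0, 1/2, 1/2, 0, 0, 0, 0, 0, 0, 0, 0, 0, 0, 0, 0, 0, 0], [0, 0, 0, 0, 1/2, 1/2, 0, 0, 0, 1/2, 0, 1/2, 0, 0, 0, 0, 0, 0, 0, 0, 0, 0, 0, 0], [1/2, 0, 0, 1/2, 0, 0, 0, 0, 0, 0, 1/2, 1/2, 0, 0, 0, 0, 0, 0, 0, 0, 0, 0, 0, 0], [-(3/8), -(3/8), 0, 1/8, -(3/16), -(1/16), 5/16, 5/16, 1/8, 1/8, 1/2, -(3/8), -(3/8), 0, 0, 0, -(3/8), 0, 0, 0, -(3/8), 0, 0, 0]]"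

definition FL :: "int list list" where
  "FL = [[0, -1, 0, -1, 0, 0, 0, 0, 0, -1, 0, -1, 1, 1, 1, 1, 2, 0, 1, 1, 1, 1, 1, 1], [0, 0, 0, 0, 0, -1, -1, 0, -1, -1, 0, 0, 1, 1, 1, 1, 1, 1, 1, 1, 2, 1, 1, 0], [0, 0, 0, 0, -1, -1, 0, 0, 0, -1, 0, -1, 1, 1, 1, 1, 2, 1, 0, 1, 1, 1, 1, 1], [-1, 0, 0, -1, 0, 0, 0, 0, 0, 0, -1, -1, 1, 1, 1, 1, 1, 1, 1, 1, 1, 0, 1, 2], [0, 0, 0, -1, 0, -1, -1, -1, -1, -1, -1, 0, 0, 0, 1, 0, 0, 0, 1, 0, 1, 0, 0, 0]]"

definition BT :: "rat list list" where
  "BT = [[-2, -(1/2), -1, -1, -1], [-(1/2), -2, -1, 0, -2], [-1, -1, -2, -(1/2), -1], [-1, 0, -(1/2), -2, -1], [-1, -2, -1, -1, -(29/16)]]"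

definition JL :: "nat list" where
  "JL = [1, 2, 4, 5, 6, 8, 9, 11, 12, 13, 14, 15, 19, 20, 22]"

definition PL :: "nat list" where
  "PL = [0, 3, 7, 10, 16, 17, 18, 21, 23]"

definition KL :: "int list list" where
  "KL = [[1, 0, -1, 0, 0, 0, 0, 0, 0, 1, 0, -1, 0, 1, 0, -1, 0, 0, 0, 0, 1, 0, -1, 0], [0, -1, 0, 1, 0, 0, 0, 0, 0, 1, 0, -1, -1, 0, 1, 0, 0, 0, 0, 0, 1, 0, -1, 0], [0, 0, 0, 0, -1, 1, -1, 1, 0, 0, 0, 0, 1, -1, 1, -1, 0, 0, 0, 0, 0, 0, 0, 0], [0, 0, 0, 0, 0, 0, 0, 0, -1, 1, 1, -1, -1, 1, 1, -1, 0, 0, 0, 0, 0, 0, 0, 0], [0, 1, -1, 0, 0, 1, -1, 0, 0, 0, 0, 0, 1, 0, 0, -1, 1, 0, 0, -1, 0, 0, 0, 0], [0, 0, 0, 0, 0, 1, -1, 0, 1, -1, 0, 0, 1, -1, 0, 0, 0, 1, 0, -1, 0, 0, 0, 0], [0, 1, -1, 0, 0, 0, 0, 0, 1, -1, 0, 0, 1, 0, -1, 0, 0, 0, 1, -1, 0, 0, 0, 0], [0, 0, 0, 0, 1, -1, 0, 0, 0, 1, 0, -1, -1, 1, 0, 0, 0, 0, 0, 0, 0, 1, -1, 0], [0, 0, 0, 0, 1, -1, 0, 0, 0, -1, 0, 1, 0, 0, -1, 1, 0, 0, 0, 0, -1, 0, 0, 1]]"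

definition AL :: "int list list" where
  "AL = [[4, 8, -8, 13, -15, 23, -5, -4, 18, -12, 8, -16, -14, 8, 4], [-2, -4, 2, -4, 6, -10, 2, 2, -7, 4, -3, 6, 6, -3, -1], [3, 5, -4, 6, -8, 13, -3, -2, 10, -6, 4, -8, -8, 4, 2], [-6, -10, 11, -17, 20, -30, 7, 5, -24, 16, -10, 22, 18, -10, -6], [6, 12, -10, 16, -20, 30, -6, -6, 23, -15, 11, -21, -18, 10, 4]]"

definition BL :: "int list list" where
  "BL = [[5, 9, -9, 14, -17, 26, -5, -5, 20, -13, 9, -19, -15, 9, 4], [0, 0, 0, 0, 0, 0, 0, 0, 0, 0, 0, 0, 0, 0, 0], [0, 0, 0, 0, 0, 0, 0, 0, 0, 0, 0, 0, 0, 0, 0], [0, 0, 0, 0, 0, 0, 0, 0, 0, 0, 0, 0, 0, 0, 0], [0, 0, 0, 0, 0, 0, 0, 0, 0, 0, 0, 0, 0, 0, 0], [0, 0, 0, 0, 0, 0, 0, 0, 0, 0, 0, 0, 0, 0, 0], [-3, -5, 5, -8, 9, -14, 3, 3, -11, 7, -5, 10, 9, -5, -2], [0, 0, 0, 0, 0, 0, 0, 0, 0, 0, 0, 0, 0, 0, 0], [0, 0, 0, 0, 0, 0, 0, 0, 0, 0, 0, 0, 0, 0, 0], [-5, -9, 9, -14, 17, -26, 5, 5, -20, 13, -9, 18, 16, -9, -4], [0, 0, 0, 0, 0, 0, 0, 0, 0, 0, 0, -1, 0, 0, 1], [4, 6, -6, 10, -12, 18, -4, -4, 14, -9, 6, -13,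 -11, 6, 3], [4, 7, -7, 11, -13, 20, -4, -4, 15, -10, 7, -14, -12, 7, 3], [-2, -3, 3, -5, 6, -9, 2, 2, -7, 4, -3, 6, 6, -3, -1], [0, 1, 0, 0, 0, 0, 0, 0, 0, 0, 0, 0, 0, 0, 0], [0, 0, 0, 0, 0, 0, 0, 0, 0, 0, 0, 0, 0, 0, 0], [3, 4, -4, 7, -8, 12, -3, -2, 10, -6, 4, -8, -8, 4, 2], [0, 0, 0, 0, 0, 0, 0, 0, 0, 0, 0, 0, 0, 0, 0], [0, 0, 0, 0, 0, 0, 0, 0, 0, 0, 0, 0, 0, 0, 0], [0, 0, 0, 0, 0, 0, 0, 0, 0, 0, 0, 0, 0, 0, 0], [0, 1, -1, 1, -1, 1, 0, 0, 1, -1, 1, -1, 0, 0, 0], [0, 0, 0, 0, 0, 0, 0, 0, 0, 0, 0, 0, 0, 0, 0], [0, 0, 0, 0, 0, 0, 0, 0, 0, 0, 0, 0, 0, 0, 0], [2, 4, -2, 4, -6, 10, -2, -2, 7, -4, 3, -6, -6, 3, 1]]"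

definition MU :: "int list" where
  "MU = [2, 2, 2, 2, 16]"

definition ZL :: "int list list" where
  "ZL = [[0, 0, 0, 2, 0, 0, 0, 0, 0, 2, 0, 0, -1, 0, 1, 0, 0, 0, 0, 0, 1, 0, -1, 0], [0, 0, 0, 0, 0, 1, 1, 0, 1, 1, 0, 0, 0, 0, 0, 0, 0, 0, 0, 0, 0, 0, 0, 0], [-1, 0, 1, 0, 0, 2, -1, 1, 0, 0, 0, 2, 1, -2, 1, 0, 0, 0, 0, 0, -1, 0, 1, 0], [2, 0, -1, 1, 0, 0, 0, 0, 1, 0, 0, 1, 1, 0, -1, 0, 0, 0, 0, 0, 1, 0, -1, 0], [5, 0, -11, -4, 0, -4, 8, 2, 10, -1, 0, -3, 5, 6, -17, 0, -6, 0, 0, 0, -1, 0, -5, 0]]"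

lemma gram_sym: "gram u v = gram v u"
  unfolding gram_def adj_def by auto

lemma bil_Gx: "bil x y = (\<Sum>v<24. Gx x v * y v)"
  unfolding bil_def Gx_def sum_distrib_right by (rule sum.swap)

lemma Gx_swap: "(\<Sum>u<24. y u * Gx x u) = (\<Sum>t<24. x t * Gx y t)"
  unfolding Gx_def sum_distrib_left
  by (subst sum.swap) (simp add: gram_sym mult_ac)

lemma Gx_lin: "Gx (\<lambda>u. \<Sum>k\<in>S. a k * y k u) v = (\<Sum>k\<in>S. a k * Gx (y k) v)"
  unfolding Gx_def sum_distrib_right sum_distrib_left
  by (subst sum.swap) (simp add: mult_ac)

lemma Gx_diff: "Gx (\<lambda>u. x u - y u) v = Gx x v - Gx y v"
  unfolding Gx_def by (simp add: left_diff_distrib sum_subtractf)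

lemma Gx_scale: "Gx (\<lambda>u. a * x u) v = a * Gx x v"
  unfolding Gx_def by (simp add: sum_distrib_left mult_ac)

lemma sum_upt: "(\<Sum>v<n. f v) = sum_list (map f [0..<n])"
  by (simp add: sum_set_upt_conv_sum_list_nat[symmetric] atLeast0LessThan)

lemma adj_chk: "list_all (\<lambda>v. list_all (\<lambda>u. adj u v = (u \<in> set (NB!v))) [0..<24]) [0..<24]"
  by code_simp

lemma NB_chk: "list_all (\<lambda>v. distinct (NB!v) \<and> list_all (\<lambda>u. u < 24) (NB!v)) [0..<24]"
  by code_simp

lemma gram_NB: "u < 24 \<Longrightarrow> v < 24 \<Longrightarrow>
   gram u v = (if u \<in> set (NB!v) then 1 else 0) - (if u = v then 2 else 0)"
  using adj_chk by (simp add: list_all_iff gram_def)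

lemma Gx_sparse:
  assumes "v < 24"
  shows "Gx x v = sum_list (map x (NB!v)) - 2 * x v"
proof -
  have d: "distinct (NB!v)" and s: "set (NB!v) \<subseteq> {..<24}"
    using NB_chk assms by (auto simp: list_all_iff)
  have "Gx x v = (\<Sum>u<24. (if u \<in> set (NB!v) then x u else 0) - (if u = v then 2 * x u else 0))"
    unfolding Gx_def by (rule sum.cong) (auto simp: gram_NB assms)
  also have "\<dots> = (\<Sum>u<24. if u \<in> set (NB!v) then x u else 0) - (\<Sum>u<24. if u = v then 2 * x u else 0)"
    by (rule sum_subtractf)
  also have "(\<Sum>u<24. if u \<in> set (NB!v) then x u else 0) = sum x (set (NB!v))"
    using s by (simp add: sum.inter_restrict[symmetric] Int_absorb1)
  also have "(\<Sum>u<24. if u = v then 2 * x u else 0) = 2 * x v"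
    using assms by simp
  also have "sum x (set (NB!v)) = sum_list (map x (NB!v))"
    using d by (simp add: sum_list_distinct_conv_sum_set)
  finally show ?thesis .
qed

definition e :: "nat \<Rightarrow> nat \<Rightarrow> rat" where "e k = vl (EL!k)"
definition zk :: "nat \<Rightarrow> nat \<Rightarrow> rat" where "zk k = vl (map of_int (ZL!k))"
definition kv :: "nat \<Rightarrow> nat \<Rightarrow> rat" where "kv p = vl (map of_int (KL!p))"
definition bcol :: "nat \<Rightarrow> nat \<Rightarrow> rat" where
  "bcol a u = (if u < 24 then of_int (BL!u!a) else 0)"

lemma len_chk: "list_all (\<lambda>k. length (EL!k) = 24 \<and> length (ZL!k) = 24) [0..<5]
   \<and> length JL = 15 \<and> length PL = 9 \<and> list_all (\<lambda>p. length (KL!p) = 24) [0..<9]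
   \<and> list_all (\<lambda>v. v < 24) JL \<and> list_all (\<lambda>v. v < 24) PL
   \<and> list_all (\<lambda>v. v \<in> set JL \<or> v \<in> set PL) [0..<24]"
  by code_simp

lemma F_chk: "list_all (\<lambda>k. list_all (\<lambda>v. sum_list (map (vl (EL!k)) (NB!v)) - 2 * vl (EL!k) v
    = of_int (FL!k!v)) [0..<24]) [0..<5]"
  by code_simp

lemma BT_chk: "list_all (\<lambda>k. list_all (\<lambda>l. sum_list (map (\<lambda>v. of_int (FL!k!v) * vl (EL!l) v) [0..<24])
    = BT!k!l) [0..<5]) [0..<5]"
  by code_simp

lemma Z_chk: "list_all (\<lambda>k. list_all (\<lambda>v. sum_list (map (vl (map of_int (ZL!k))) (NB!v))
    - 2 * vl (map of_int (ZL!k)) v = of_int (MU!k) * of_int (FL!k!v)) [0..<24]) [0..<5]"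
  by code_simp

lemma K_chk: "list_all (\<lambda>p. list_all (\<lambda>t. sum_list (map (vl (map of_int (KL!p))) (NB!t))
    - 2 * vl (map of_int (KL!p)) t = 0) [0..<24]) [0..<9]"
  by code_simp

lemma K_chk2: "list_all (\<lambda>p. list_all (\<lambda>u. (u = PL!p \<and> vl (map of_int (KL!p)) u = 1) \<or>
    (u \<noteq> PL!p \<and> (u \<in> set JL \<or> vl (map of_int (KL!p)) u = 0))) [0..<24]) [0..<9]"
  by code_simp

lemma C_chk: "list_all (\<lambda>a. list_all (\<lambda>b.
    sum_list (map (\<lambda>u. if u < 24 then of_int (BL!u!a) else 0) (NB!(JL!b)))
    - 2 * (if JL!b < 24 then of_int (BL!(JL!b)!a) else 0)
    + sum_list (map (\<lambda>k. of_int (AL!k!a) * of_int (FL!k!(JL!b))) [0..<5])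
    = (if a = b then (1::rat) else 0)) [0..<15]) [0..<15]"
  by code_simp

lemma LA: "list_all P [0..<n] \<longleftrightarrow> (\<forall>k<n. P k)"
  by (auto simp: list_all_iff)

lemma lens:
  "k < 5 \<Longrightarrow> length (EL!k) = 24" "k < 5 \<Longrightarrow> length (ZL!k) = 24"
  "length JL = 15" "length PL = 9" "p < 9 \<Longrightarrow> length (KL!p) = 24"
  "a < 15 \<Longrightarrow> JL!a < 24" "p < 9 \<Longrightarrow> PL!p < 24"
  "v < 24 \<Longrightarrow> v \<in> set JL \<or> v \<in> set PL"
  using len_chk by (auto simp: LA list_all_iff)

lemma e_zero: "k < 5 \<Longrightarrow> 24 \<le> u \<Longrightarrow> e k u = 0"
  using lens(1) by (simp add: e_def vl_def)

lemma zk_zero: "k < 5 \<Longrightarrow> 24 \<le> u \<Longrightarrow> zk k u = 0"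
  using lens(2) by (simp add: zk_def vl_def)

lemma zk_int: "zk k u \<in> \<int>"
  by (auto simp: zk_def vl_def)

lemma e_Q: "k < 5 \<Longrightarrow> e k \<in> QGamma"
  using e_zero by (simp add: QGamma_def)

lemma Gx_e: "k < 5 \<Longrightarrow> v < 24 \<Longrightarrow> Gx (e k) v = of_int (FL!k!v)"
  using F_chk by (simp add: LA Gx_sparse e_def)

lemma Gx_zk: "k < 5 \<Longrightarrow> v < 24 \<Longrightarrow> Gx (zk k) v = of_int (MU!k) * of_int (FL!k!v)"
  using Z_chk by (simp add: LA Gx_sparse zk_def)

lemma Gx_kv: "p < 9 \<Longrightarrow> t < 24 \<Longrightarrow> Gx (kv p) t = 0"
  using K_chk by (simp add: LA Gx_sparse kv_def)

lemma kv_struct: "p < 9 \<Longrightarrow> u < 24 \<Longrightarrow> (u = PL!p \<and> kv p u = 1) \<or>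
    (u \<noteq> PL!p \<and> (u \<in> set JL \<or> kv p u = 0))"
  using K_chk2 by (simp add: LA kv_def)

lemma Gx_bcol: "a < 15 \<Longrightarrow> b < 15 \<Longrightarrow>
   Gx (bcol a) (JL!b) + (\<Sum>k<5. of_int (AL!k!a) * of_int (FL!k!(JL!b))) = (if a = b then 1 else 0)"
proof -
  assume a: "a < 15" and b: "b < 15"
  have "\<forall>a<15. \<forall>b<15. sum_list (map (\<lambda>u. if u < 24 then of_int (BL!u!a) else 0) (NB!(JL!b)))
    - 2 * (if JL!b < 24 then of_int (BL!(JL!b)!a) else 0)
    + sum_list (map (\<lambda>k. of_int (AL!k!a) * of_int (FL!k!(JL!b))) [0..<5])
    = (if a = b then (1::rat) else 0)" using C_chk by (simp only: LA)
  then have h: "sum_list (map (\<lambda>u. if u < 24 then of_int (BL!u!a) else 0) (NB!(JL!b)))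
    - 2 * (if JL!b < 24 then of_int (BL!(JL!b)!a) else 0)
    + sum_list (map (\<lambda>k. of_int (AL!k!a) * of_int (FL!k!(JL!b))) [0..<5])
    = (if a = b then (1::rat) else 0)" using a b by blast
  show ?thesis unfolding Gx_sparse[OF lens(6)[OF b]] sum_upt bcol_def[abs_def] using h .
qed

lemma bil_e: "k < 5 \<Longrightarrow> l < 5 \<Longrightarrow> bil (e k) (e l) = BT!k!l"
proof -
  assume a: "k < 5" "l < 5"
  have "bil (e k) (e l) = (\<Sum>v<24. of_int (FL!k!v) * e l v)"
    unfolding bil_Gx using a by (intro sum.cong) (auto simp: Gx_e)
  then show ?thesis using BT_chk a by (simp add: LA sum_upt e_def)
qed

lemma e_dual: "k < 5 \<Longrightarrow> e k \<in> dualL"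
proof -
  assume a: "k < 5"
  { fix y assume y: "y \<in> ZGamma"
    have "bil (e k) y = (\<Sum>v<24. of_int (FL!k!v) * y v)"
      unfolding bil_Gx using a by (intro sum.cong) (auto simp: Gx_e)
    also have "\<dots> \<in> \<int>" using y by (intro Ints_sum Ints_mult) (auto simp: ZGamma_def)
    finally have "bil (e k) y \<in> \<int>" . }
  then show ?thesis using e_Q a by (simp add: dualL_def)
qed

lemma rad_intro: "r \<in> QGamma \<Longrightarrow> (\<And>v. v < 24 \<Longrightarrow> Gx r v = 0) \<Longrightarrow> r \<in> radQ"
  by (simp add: radQ_def bil_Gx)

lemma all5: "(\<forall>k<5. P k) \<longleftrightarrow> P 0 \<and> P 1 \<and> P 2 \<and> P 3 \<and> P (4::nat)"
  by (auto simp: numeral_eq_Suc less_Suc_eq)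

lemma sum5: "(\<Sum>k<5. (f::nat\<Rightarrow>rat) k) = f 0 + f 1 + f 2 + f 3 + (f 4 :: rat)"
  by (simp add: numeral_eq_Suc)

lemma item4: "\<forall>k<5. (bil (e k) (e k) - target_gram k k) / 2 \<in> \<int>"
  by (simp add: all5 bil_e BT_def target_gram_def)

lemma item5: "\<forall>k<5. \<forall>l<5. k \<noteq> l \<longrightarrow> bil (e k) (e l) - target_gram k l \<in> \<int>"
  by (simp add: all5 bil_e BT_def target_gram_def)

lemma Ints_of_floor: "(x::rat) \<in> \<int> \<Longrightarrow> of_int \<lfloor>x\<rfloor> = x"
  by (auto elim: Ints_cases)

lemma gen:
  assumes x: "x \<in> dualL"
  shows "\<exists>c. in_S (\<lambda>u. x u - lincomb c e u)"
proof -
  define w where "w v = Gx x v" for v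
  have xQ: "x \<in> QGamma" using x by (simp add: dualL_def)
  have wI: "w v \<in> \<int>" if "v < 24" for v
  proof -
    define d where "d u = (if u = v then (1::rat) else 0)" for u
    have "d \<in> ZGamma" using that by (auto simp: ZGamma_def QGamma_def d_def)
    hence "bil x d \<in> \<int>" using x by (auto simp: dualL_def)
    moreover have "bil x d = w v" using that unfolding bil_Gx w_def d_def
      by (simp add: if_distrib cong: if_cong)
    ultimately show ?thesis by simp
  qed
  define cr where "cr k = (\<Sum>a<15. of_int (AL!k!a) * w (JL!a))" for k
  define c where "c k = \<lfloor>cr k\<rfloor>" for k
  have crI: "cr k \<in> \<int>" for k
    unfolding cr_def by (intro Ints_sum Ints_mult wI lens) auto
  have c_eq: "of_int (c k) = cr k" for k
    using crI by (simp add: c_def Ints_of_floor)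
  define zz where "zz u = (\<Sum>a<15. w (JL!a) * bcol a u)" for u
  have zzZ: "zz \<in> ZGamma"
    unfolding ZGamma_def QGamma_def zz_def bcol_def
    by (auto intro!: Ints_sum Ints_mult wI lens)
  define r where "r u = x u - lincomb c e u - zz u" for u
  have lin0: "lincomb c e u = 0" if "24 \<le> u" for u
    using that by (simp add: lincomb_def e_zero)
  have rQ: "r \<in> QGamma"
    using xQ zzZ lin0 by (auto simp: r_def QGamma_def ZGamma_def)
  have GrJ: "Gx r (JL!b) = 0" if b: "b < 15" for b
  proof -
    have "Gx r (JL!b) = w (JL!b) - (\<Sum>k<5. of_int (c k) * Gx (e k) (JL!b))
        - (\<Sum>a<15. w (JL!a) * Gx (bcol a) (JL!b))"
      unfolding r_def[abs_def] lincomb_def zz_def[abs_def] Gx_diff Gx_lin w_def ..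
    also have "(\<Sum>k<5. of_int (c k) * Gx (e k) (JL!b))
        = (\<Sum>a<15. w (JL!a) * (\<Sum>k<5. of_int (AL!k!a) * of_int (FL!k!(JL!b))))"
      using lens(6)[OF b]
      by (simp add: c_eq cr_def Gx_e sum_distrib_left sum_distrib_right mult_ac
            sum.swap[of _ "{..<5}"])
    finally have "Gx r (JL!b) = w (JL!b) - (\<Sum>a<15. w (JL!a) *
        ((\<Sum>k<5. of_int (AL!k!a) * of_int (FL!k!(JL!b))) + Gx (bcol a) (JL!b)))"
      by (simp add: distrib_left sum.distrib)
    also have "(\<Sum>a<15. w (JL!a) *
        ((\<Sum>k<5. of_int (AL!k!a) * of_int (FL!k!(JL!b))) + Gx (bcol a) (JL!b)))
        = (\<Sum>a<15. if a = b then w (JL!a) else 0)"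
      using b by (intro sum.cong refl) (simp add: Gx_bcol add.commute)
    also have "\<dots> = w (JL!b)" using b by simp
    finally show ?thesis by simp
  qed
  have GrJ': "Gx r v = 0" if "v \<in> set JL" for v
    using that GrJ lens(3) by (auto simp: in_set_conv_nth)
  have Gr: "Gx r v = 0" if v: "v < 24" for v
  proof (cases "v \<in> set JL")
    case True then show ?thesis by (rule GrJ')
  next
    case False
    then have "v \<in> set PL" using lens(8)[OF v] by auto
    then obtain p where p: "p < 9" and vp: "v = PL!p" using lens(4) by (auto simp: in_set_conv_nth)
    have "(\<Sum>u<24. kv p u * Gx r u) = (\<Sum>t<24. r t * Gx (kv p) t)" by (rule Gx_swap)
    also have "\<dots> = 0" using p by (simp add: Gx_kv)
    finally have s0: "(\<Sum>u<24. kv p u * Gx r u) = 0" .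
    have "(\<Sum>u<24. kv p u * Gx r u) = (\<Sum>u<24. if u = PL!p then Gx r u else 0)"
    proof (intro sum.cong refl)
      fix u assume "u \<in> {..<24::nat}"
      then have "u < 24" by simp
      from kv_struct[OF p this] GrJ'[of u]
      show "kv p u * Gx r u = (if u = PL!p then Gx r u else 0)" by auto
    qed
    also have "\<dots> = Gx r (PL!p)" using lens(7)[OF p] by simp
    finally show ?thesis using s0 vp by simp
  qed
  have "r \<in> radQ" using rQ Gr by (rule rad_intro)
  moreover have "(\<lambda>u. x u - lincomb c e u) = (\<lambda>u. zz u + r u)"
    by (simp add: r_def)
  ultimately show ?thesis using zzZ unfolding in_S_def by blast
qed

lemma dvd_of_rat: "(of_int a :: rat) / of_int m \<in> \<int> \<Longrightarrow> m \<noteq> 0 \<Longrightarrow> m dvd a"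
proof -
  assume h: "(of_int a :: rat) / of_int m \<in> \<int>" and m: "m \<noteq> 0"
  then obtain n where "(of_int a :: rat) / of_int m = of_int n" by (auto elim: Ints_cases)
  then have "(of_int a :: rat) = of_int (m * n)" using m by (simp add: field_simps)
  then have "a = m * n" by (simp only: of_int_eq_iff)
  then show ?thesis by simp
qed

lemma item3_dir1:
  assumes h: "in_S (lincomb c e)"
  shows "(\<forall>k<4. 2 dvd c k) \<and> 16 dvd c 4"
proof -
  obtain z r where z: "z \<in> ZGamma" and r: "r \<in> radQ" and eq: "lincomb c e = (\<lambda>u. z u + r u)"
    using h unfolding in_S_def by blast
  have I: "(\<Sum>k<5. of_int (c k) * BT!j!k) \<in> \<int>" if j: "j < 5" for j
  proof -
    have "bil (e j) (lincomb c e) = (\<Sum>v<24. Gx (e j) v * (\<Sum>k<5. of_int (c k) * e k v))"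
      by (simp add: bil_Gx lincomb_def)
    also have "\<dots> = (\<Sum>k<5. of_int (c k) * (\<Sum>v<24. Gx (e j) v * e k v))"
      by (simp add: sum_distrib_left sum.swap[of _ "{..<5}"] mult_ac)
    also have "\<dots> = (\<Sum>k<5. of_int (c k) * BT!j!k)"
      using j by (intro sum.cong refl) (simp add: bil_Gx[symmetric] bil_e)
    finally have 1: "bil (e j) (lincomb c e) = (\<Sum>k<5. of_int (c k) * BT!j!k)" .
    have "bil (e j) (lincomb c e) = (\<Sum>v<24. Gx (e j) v * z v) + (\<Sum>v<24. Gx (e j) v * r v)"
      by (simp add: eq bil_Gx distrib_left sum.distrib)
    also have "(\<Sum>v<24. Gx (e j) v * r v) = 0"
    proof -
      have "(\<Sum>v<24. Gx (e j) v * r v) = bil (e j) r" by (simp add: bil_Gx)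
      also have "\<dots> = bil r (e j)"
        unfolding bil_def by (subst sum.swap) (simp add: gram_sym mult_ac)
      also have "\<dots> = 0" using r e_Q[OF j] by (simp add: radQ_def)
      finally show ?thesis .
    qed
    finally have 2: "bil (e j) (lincomb c e) = (\<Sum>v<24. Gx (e j) v * z v)" by simp
    have "(\<Sum>v<24. Gx (e j) v * z v) \<in> \<int>"
      using z j by (intro Ints_sum Ints_mult) (auto simp: Gx_e ZGamma_def)
    then show ?thesis using 1 2 by simp
  qed
  have I0: "(\<Sum>k<5. of_int (c k) * BT!1!k) \<in> \<int>" using I[of 1] by simp
  have I1: "(\<Sum>k<5. of_int (c k) * BT!0!k) \<in> \<int>" using I[of 0] by simp
  have I2: "(\<Sum>k<5. of_int (c k) * BT!3!k) \<in> \<int>" using I[of 3] by simp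
  have I3: "(\<Sum>k<5. of_int (c k) * BT!2!k) \<in> \<int>" using I[of 2] by simp
  have I4: "(\<Sum>k<5. of_int (c k) * BT!4!k) \<in> \<int>" using I[of 4] by simp
  have "of_int (c 0) / of_int 2 = - (\<Sum>k<5. of_int (c k) * BT!1!k) - of_int (2 * c 1 + c 2 + 2 * c 4)"
    by (simp add: sum5 BT_def field_simps)
  also have "\<dots> \<in> \<int>" using I0 by (intro Ints_diff Ints_minus Ints_of_int)
  finally have d0: "2 dvd c 0" by (rule dvd_of_rat) simp
  have "of_int (c 1) / of_int 2 = - (\<Sum>k<5. of_int (c k) * BT!0!k) - of_int (2 * c 0 + c 2 + c 3 + c 4)"
    by (simp add: sum5 BT_def field_simps)
  also have "\<dots> \<in> \<int>" using I1 by (intro Ints_diff Ints_minus Ints_of_int)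
  finally have d1: "2 dvd c 1" by (rule dvd_of_rat) simp
  have "of_int (c 2) / of_int 2 = - (\<Sum>k<5. of_int (c k) * BT!3!k) - of_int (c 0 + 2 * c 3 + c 4)"
    by (simp add: sum5 BT_def field_simps)
  also have "\<dots> \<in> \<int>" using I2 by (intro Ints_diff Ints_minus Ints_of_int)
  finally have d2: "2 dvd c 2" by (rule dvd_of_rat) simp
  have "of_int (c 3) / of_int 2 = - (\<Sum>k<5. of_int (c k) * BT!2!k) - of_int (c 0 + c 1 + 2 * c 2 + c 4)"
    by (simp add: sum5 BT_def field_simps)
  also have "\<dots> \<in> \<int>" using I3 by (intro Ints_diff Ints_minus Ints_of_int)
  finally have d3: "2 dvd c 3" by (rule dvd_of_rat) simp
  have "of_int (29 * c 4) / of_int 16 = - (\<Sum>k<5. of_int (c k) * BT!4!k) - of_int (c 0 + 2 * c 1 + c 2 + c 3)"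
    by (simp add: sum5 BT_def field_simps)
  also have "\<dots> \<in> \<int>" using I4 by (intro Ints_diff Ints_minus Ints_of_int)
  finally have "16 dvd 29 * c 4" by (rule dvd_of_rat) simp
  then have d4: "16 dvd c 4" by presburger
  have "\<forall>k<4. 2 dvd c k" using d0 d1 d2 d3 by (auto simp: numeral_eq_Suc less_Suc_eq)
  with d4 show ?thesis by blast
qed

lemma item3_dir2:
  assumes h: "(\<forall>k<4. 2 dvd c k) \<and> 16 dvd c 4"
  shows "in_S (lincomb c e)"
proof -
  have h0: "2 dvd c 0" "2 dvd c 1" "2 dvd c 2" "2 dvd c 3" "16 dvd c 4" using h by auto
  have "\<forall>k<5. c k = MU!k * (c k div MU!k)"
    unfolding all5 using h0 by (simp add: MU_def)
  then have cd: "c k = MU!k * (c k div MU!k)" if "k < 5" for k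
    using that by blast
  define d where "d k = c k div MU!k" for k
  define rk where "rk k u = of_int (MU!k) * e k u - zk k u" for k u
  define z where "z u = (\<Sum>k<5. of_int (d k) * zk k u)" for u
  define r where "r u = (\<Sum>k<5. of_int (d k) * rk k u)" for u
  have zZ: "z \<in> ZGamma"
    unfolding ZGamma_def QGamma_def z_def
    by (auto intro!: Ints_sum Ints_mult zk_int simp: zk_zero)
  have rQ: "r \<in> QGamma"
    by (auto simp: QGamma_def r_def rk_def zk_zero e_zero)
  have Grk: "Gx (rk k) v = 0" if "k < 5" "v < 24" for k v
    unfolding rk_def[abs_def] Gx_diff Gx_scale using that by (simp add: Gx_e Gx_zk)
  have Gr: "Gx r v = 0" if "v < 24" for v
    unfolding r_def[abs_def] Gx_lin using that by (simp add: Grk)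
  have rR: "r \<in> radQ" using rQ Gr by (rule rad_intro)
  have "lincomb c e = (\<lambda>u. z u + r u)"
  proof
    fix u
    have "z u + r u = (\<Sum>k<5. of_int (d k) * (of_int (MU!k) * e k u))"
      by (simp add: z_def r_def rk_def sum.distrib[symmetric] algebra_simps)
    also have "\<dots> = (\<Sum>k<5. of_int (c k) * e k u)"
    proof (intro sum.cong refl)
      fix k assume "k \<in> {..<5::nat}"
      then have "c k = MU!k * d k" using cd d_def by simp
      then show "of_int (d k) * (of_int (MU!k) * e k u) = of_int (c k) * e k u" by simp
    qed
    finally show "lincomb c e u = z u + r u" by (simp add: lincomb_def)
  qed
  then show ?thesis using zZ rR unfolding in_S_def by blast
qed

theorem proposition4p4:
  "\<exists>e :: nat \<Rightarrow> nat \<Rightarrow> rat.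
     (\<forall>k<5. e k \<in> dualL) \<and>
     (\<forall>x \<in> dualL. \<exists>c :: nat \<Rightarrow> int. in_S (\<lambda>u. x u - lincomb c e u)) \<and>
     (\<forall>c :: nat \<Rightarrow> int. in_S (lincomb c e) \<longleftrightarrow> ((\<forall>k<4. 2 dvd c k) \<and> 16 dvd c 4)) \<and>
     (\<forall>k<5. (bil (e k) (e k) - target_gram k k) / 2 \<in> \<int>) \<and>
     (\<forall>k<5. \<forall>l<5. k \<noteq> l \<longrightarrow> bil (e k) (e l) - target_gram k l \<in> \<int>)"
  using e_dual gen item3_dir1 item3_dir2 item4 item5 by blast

end
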